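(* Let $h_U := \frac{1}{\operatorname{Im}\alpha}\, h$, where $h$ is the hermitian metric on $\mathbb C\times\mathbb H\times\mathbb H$ described in the context. Then for every $s_0\in\mathbb H$ the restriction of $h_U$ to the complex submanifold $\{s=s_0\}=\{(z,\alpha,s_0)\}$ is a Kähler metric, and for every $\alpha_0\in\mathbb H$ the restriction of $h_U$ to the complex submanifold $\{\alpha=\alpha_0\}=\{(z,\alpha_0,s)\}$ is a Kähler metric. Since $h_U$ is invariant under the group $\tilde G$, the same holds on the quotient $(\mathbb C\times\mathbb H\times\mathbb H)/\tilde G$ for the fibers of the two holomorphic maps $\nu$ and $\eta$ induced by $(z,\alpha,s)\mapsto s$ and $(z,\alpha,s)\mapsto \alpha$ respectively.
   Context: $\mathbb H=\{w\in\mathbb C:\operatorname{Im} w>0\}$. On $\mathbb C\times\mathbb H\times\mathbb H$ use holomorphic coordinates $(z,\alpha,s)$. (Here $s$ parametrizes the elliptic curve $X_s=\mathbb C/(\mathbb Z\oplus s\mathbb Z)$ and $\alpha$ parametrizes the complexified Kähler class $\frac{\alpha}{\operatorname{Im} s}\frac{i}{2}dz\wedge d\bar z$ on $X_s$, whose volume is $\operatorname{Im}\alpha$.) Define the functions $g_{\mathcal X/S}=\frac{\alpha-\bar\alpha}{s-\bar s}=\frac{\operatorname{Im}\alpha}{\operatorname{Im}s}$, $g_{L^2}=\frac{i}{2}\frac{1}{\alpha-\bar\alpha}=\frac{1}{4\operatorname{Im}\alpha}$, $g_{WP}=\frac{i}{2}\frac{\alpha-\bar\alpha}{(s-\bar s)^2}=\frac{\operatorname{Im}\alpha}{4(\operatorname{Im}s)^2}$,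 $a=-\frac{z-\bar z}{s-\bar s}=-\frac{\operatorname{Im}z}{\operatorname{Im}s}$. Let $h=\sum_{j,k} h_{j\bar k}\,dw_j\otimes d\bar w_k$ (with $(w_1,w_2,w_3)=(z,\alpha,s)$) be the hermitian metric whose coefficient matrix is $\begin{pmatrix} g_{\mathcal X/S} & 0 & g_{\mathcal X/S}\bar a\\ 0 & g_{L^2} & 0\\ a\, g_{\mathcal X/S} & 0 & g_{WP}+a\, g_{\mathcal X/S}\,\bar a\end{pmatrix}$, i.e. $h=g_{\mathcal X/S}\,|dz+a\,ds|^2+g_{L^2}|d\alpha|^2+g_{WP}|ds|^2$. (This is the pullback of the paper's natural hermitian metric $\omega$ on the fiber product of the universal family of marked elliptic curves with its bundle of complexified Kähler cones.) The group $\tilde G=\{g_{n,m}:(z,\alpha,s)\mapsto(z+n+ms,\alpha,s)\mid n,m\in\mathbb Z\}$ acts freely and properly, and $h$ is $\tilde G$-invariant. A hermitian metric $\sum h_{j\bar k}dw_j\otimes d\bar w_k$ on a complex manifold is Kähler if its associated real $(1,1)$-form $\frac{i}{2}\sum h_{j\bar k}\,dw_j\wedge d\bar w_k$ is closed; restriction to a complex submanifold means restriction of the hermitian form to its tangent vectors. *)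

theory Defs
  imports "HOL-Analysis.Analysis"
begin

definition gXS :: "complex \<Rightarrow> complex \<Rightarrow> complex" where
  "gXS \<alpha> s = (\<alpha> - cnj \<alpha>) / (s - cnj s)"

definition gL2 :: "complex \<Rightarrow> complex" where
  "gL2 \<alpha> = (\<i> / 2) * (1 / (\<alpha> - cnj \<alpha>))"

definition gWP :: "complex \<Rightarrow> complex \<Rightarrow> complex" where
  "gWP \<alpha> s = (\<i> / 2) * ((\<alpha> - cnj \<alpha>) / (s - cnj s)^2)"

definition acoef :: "complex \<Rightarrow> complex \<Rightarrow> complex" where
  "acoef z s = - ((z - cnj z) / (s - cnj s))"

text \<open>The hermitian form h at the point p = (z, alpha, s), evaluated on tangent vectors
  v = (v1,v2,v3), w = (w1,w2,w3):  h(v,w) = sum_{j,k} h_{j kbar} v_j conj(w_k).\<close>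

definition hform :: "complex \<times> complex \<times> complex \<Rightarrow> complex \<times> complex \<times> complex
    \<Rightarrow> complex \<times> complex \<times> complex \<Rightarrow> complex" where
  "hform p v w = (case p of (z, \<alpha>, s) \<Rightarrow> case v of (v1, v2, v3) \<Rightarrow> case w of (w1, w2, w3) \<Rightarrow>
       gXS \<alpha> s * v1 * cnj w1
     + gXS \<alpha> s * cnj (acoef z s) * v1 * cnj w3
     + gL2 \<alpha> * v2 * cnj w2
     + acoef z s * gXS \<alpha> s * v3 * cnj w1
     + (gWP \<alpha> s + acoef z s * gXS \<alpha> s * cnj (acoef z s)) * v3 * cnj w3)"

definition hUform :: "complex \<times> complex \<times> complex \<Rightarrow> complex \<times> complex \<times> complex
    \<Rightarrow> complex \<times> complex \<times> complex \<Rightarrow> complex" where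
  "hUform p v w = (case p of (z, \<alpha>, s) \<Rightarrow> hform p v w / complex_of_real (Im \<alpha>))"

definition gact :: "int \<Rightarrow> int \<Rightarrow> complex \<times> complex \<times> complex \<Rightarrow> complex \<times> complex \<times> complex" where
  "gact n m p = (case p of (z, \<alpha>, s) \<Rightarrow> (z + of_int n + of_int m * s, \<alpha>, s))"

text \<open>Differential of g_{n,m} (independent of the base point): dz + m ds, d alpha, ds.\<close>
definition dgact :: "int \<Rightarrow> complex \<times> complex \<times> complex \<Rightarrow> complex \<times> complex \<times> complex" where
  "dgact m v = (case v of (v1, v2, v3) \<Rightarrow> (v1 + of_int m * v3, v2, v3))"

text \<open>A metric on U \<subseteq> C^n is given by its coefficient matrix H p j k = h_{j kbar}(p).\<close>

definition hermitian_metric_on ::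
    "(complex^'n) set \<Rightarrow> (complex^'n \<Rightarrow> 'n \<Rightarrow> 'n \<Rightarrow> complex) \<Rightarrow> bool" where
  "hermitian_metric_on U H \<longleftrightarrow>
     (\<forall>p\<in>U. \<forall>j k. H p k j = cnj (H p j k)) \<and>
     (\<forall>p\<in>U. \<forall>v::complex^'n. v \<noteq> 0 \<longrightarrow>
         0 < Re (\<Sum>j\<in>UNIV. \<Sum>k\<in>UNIV. H p j k * v$j * cnj (v$k))) \<and>
     (\<forall>j k. (\<lambda>p. H p j k) differentiable_on U)"

definition dRe :: "(complex^'n \<Rightarrow> complex) \<Rightarrow> 'n \<Rightarrow> complex^'n \<Rightarrow> complex" where
  "dRe f j p = vector_derivative (\<lambda>t::real. f (p + t *\<^sub>R axis j 1)) (at 0)"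

definition dIm :: "(complex^'n \<Rightarrow> complex) \<Rightarrow> 'n \<Rightarrow> complex^'n \<Rightarrow> complex" where
  "dIm f j p = vector_derivative (\<lambda>t::real. f (p + t *\<^sub>R axis j \<i>)) (at 0)"

definition wirt :: "(complex^'n \<Rightarrow> complex) \<Rightarrow> 'n \<Rightarrow> complex^'n \<Rightarrow> complex" where
  "wirt f j p = (dRe f j p - \<i> * dIm f j p) / 2"

definition wirtbar :: "(complex^'n \<Rightarrow> complex) \<Rightarrow> 'n \<Rightarrow> complex^'n \<Rightarrow> complex" where
  "wirtbar f j p = (dRe f j p + \<i> * dIm f j p) / 2"

text \<open>Closedness of (i/2) sum h_{j kbar} dw_j /\ dwbar_k written out in coordinates:
  the (2,1)-part vanishes iff d_l h_{j kbar} = d_j h_{l kbar}, and the (1,2)-part vanishes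
  iff dbar_l h_{j kbar} = dbar_k h_{j lbar}.\<close>

definition kahler_on ::
    "(complex^'n) set \<Rightarrow> (complex^'n \<Rightarrow> 'n \<Rightarrow> 'n \<Rightarrow> complex) \<Rightarrow> bool" where
  "kahler_on U H \<longleftrightarrow> hermitian_metric_on U H \<and>
     (\<forall>p\<in>U. \<forall>j k l.
        wirt (\<lambda>q. H q j k) l p = wirt (\<lambda>q. H q l k) j p \<and>
        wirtbar (\<lambda>q. H q j k) l p = wirtbar (\<lambda>q. H q j l) k p)"

text \<open>Slice {s = s0}: coordinates q = (z, alpha) = (q$1, q$2), alpha in H.
  Embedding (z,alpha) \<mapsto> (z,alpha,s0); its differential is (u1,u2) \<mapsto> (u1,u2,0).\<close>

definition slice_s_metric :: "complex \<Rightarrow> complex^2 \<Rightarrow> 2 \<Rightarrow> 2 \<Rightarrow> complex" where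
  "slice_s_metric s0 q j k =
     hUform (q$1, q$2, s0)
       ((axis j (1::complex))$1, (axis j (1::complex))$2, 0)
       ((axis k (1::complex))$1, (axis k (1::complex))$2, 0)"

text \<open>Slice {alpha = alpha0}: coordinates q = (z, s) = (q$1, q$2), s in H.
  Embedding (z,s) \<mapsto> (z,alpha0,s); its differential is (u1,u2) \<mapsto> (u1,0,u2).\<close>

definition slice_alpha_metric :: "complex \<Rightarrow> complex^2 \<Rightarrow> 2 \<Rightarrow> 2 \<Rightarrow> complex" where
  "slice_alpha_metric \<alpha>0 q j k =
     hUform (q$1, \<alpha>0, q$2)
       ((axis j (1::complex))$1, 0, (axis j (1::complex))$2)
       ((axis k (1::complex))$1, 0, (axis k (1::complex))$2)"

text \<open>Both slices are parametrized by C x H = {q. Im (q$2) > 0}.\<close>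
definition CxH :: "(complex^2) set" where
  "CxH = {q. 0 < Im (q$2)}"

end

theory Submission
  imports Defs
begin


lemma Im_comp_Re: "Im ((p + t *\<^sub>R axis l (1::complex)) $ i) = Im (p $ i)"
  by (simp add: axis_def)

lemma Im_comp_Im: "Im ((p + t *\<^sub>R axis l \<i>) $ i) = Im (p $ i) + (if i = l then t else 0)"
  by (simp add: axis_def)

lemma dRe_val:
  fixes f :: "complex^2 \<Rightarrow> complex"
  assumes eq: "\<And>q. q \<in> CxH \<Longrightarrow> f q = of_real (G (Im (q$1)) (Im (q$2)))"
    and p: "p \<in> CxH"
  shows "dRe f l p = 0"
proof -
  have "(\<lambda>t::real. f (p + t *\<^sub>R axis l 1)) = (\<lambda>t. of_real (G (Im (p$1)) (Im (p$2))))"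
  proof
    fix t :: real
    have "p + t *\<^sub>R axis l 1 \<in> CxH" using p by (simp add: CxH_def axis_def)
    then show "f (p + t *\<^sub>R axis l 1) = of_real (G (Im (p$1)) (Im (p$2)))"
      using eq by (simp add: axis_def)
  qed
  then show ?thesis unfolding dRe_def by simp
qed

lemma dIm_val:
  fixes f :: "complex^2 \<Rightarrow> complex"
  assumes eq: "\<And>q. q \<in> CxH \<Longrightarrow> f q = of_real (G (Im (q$1)) (Im (q$2)))"
    and d1: "\<And>y t. t > 0 \<Longrightarrow> ((\<lambda>y. G y t) has_real_derivative Dy y t) (at y)"
    and d2: "\<And>y t. t > 0 \<Longrightarrow> ((\<lambda>t. G y t) has_real_derivative Dt y t) (at t)"
    and p: "p \<in> CxH"
  shows "dIm f l p = of_real (if l = 1 then Dy (Im (p$1)) (Im (p$2)) else Dt (Im (p$1)) (Im (p$2)))"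
proof -
  let ?y = "Im (p$1)" and ?t = "Im (p$2)"
  have t0: "?t > 0" using p by (simp add: CxH_def)
  define S where "S = {x::real. 0 < ?t + (if l = 2 then x else 0)}"
  have oS: "open S"
  proof (cases "l = 2")
    case True
    have "S = {-?t<..}" unfolding S_def using True by auto
    then show ?thesis by simp
  next
    case False
    then show ?thesis unfolding S_def using t0 by simp
  qed
  have 0: "0 \<in> S" unfolding S_def using t0 by simp
  have 12: "(1::2) \<noteq> 2" by simp
  have E: "f (p + x *\<^sub>R axis l \<i>) = of_real (G (?y + (if l = 1 then x else 0)) (?t + (if l = 2 then x else 0)))"
    if "x \<in> S" for x
  proof -
    have "p + x *\<^sub>R axis l \<i> \<in> CxH" using that by (simp add: CxH_def axis_def S_def split: if_splits)
    then show ?thesis using eq by (simp add: axis_def)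
  qed
  have D: "((\<lambda>x. of_real (G (?y + (if l = 1 then x else 0)) (?t + (if l = 2 then x else 0))) :: complex)
      has_vector_derivative of_real (if l = 1 then Dy ?y ?t else Dt ?y ?t)) (at 0)"
  proof (cases "l = 1")
    case True
    then have l2: "l \<noteq> 2" using 12 by auto
    have "((\<lambda>x. G (?y + x) ?t) has_real_derivative Dy ?y ?t) (at 0)"
      using DERIV_shift[of "\<lambda>y. G y ?t" "Dy ?y ?t" 0 ?y] d1[OF t0, of ?y] by (simp add: add.commute)
    then show ?thesis using True l2 by (auto intro!: has_vector_derivative_of_real)
  next
    case False
    then have l2: "l = 2" using exhaust_2[of l] by auto
    have "((\<lambda>x. G ?y (?t + x)) has_real_derivative Dt ?y ?t) (at 0)"
      using DERIV_shift[of "\<lambda>t. G ?y t" "Dt ?y ?t" 0 ?t] d2[OF t0, of ?y] by (simp add: add.commute)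
    then show ?thesis using False l2 by (auto intro!: has_vector_derivative_of_real)
  qed
  have "((\<lambda>x. f (p + x *\<^sub>R axis l \<i>)) has_vector_derivative of_real (if l = 1 then Dy ?y ?t else Dt ?y ?t)) (at 0)"
    using D unfolding has_vector_derivative_def
    by (rule has_derivative_transform_within_open[OF _ oS 0]) (use E in auto)
  then show ?thesis unfolding dIm_def by (rule vector_derivative_at)
qed

lemma kahler_from_real:
  fixes H :: "complex^2 \<Rightarrow> 2 \<Rightarrow> 2 \<Rightarrow> complex"
  assumes eq: "\<And>q j k. q \<in> CxH \<Longrightarrow> H q j k = of_real (G j k (Im (q$1)) (Im (q$2)))"
    and sym: "\<And>j k y t. G j k y t = G k j y t"
    and d1: "\<And>j k y t. t > 0 \<Longrightarrow> ((\<lambda>y. G j k y t) has_real_derivative Dy j k y t) (at y)"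
    and d2: "\<And>j k y t. t > 0 \<Longrightarrow> ((\<lambda>t. G j k y t) has_real_derivative Dt j k y t) (at t)"
    and s1: "\<And>j k y t. Dy j k y t = Dy k j y t"
    and s2: "\<And>j k y t. Dt j k y t = Dt k j y t"
    and closed: "\<And>k y t. t > 0 \<Longrightarrow> Dt 1 k y t = Dy 2 k y t"
    and pos: "\<And>q v. q \<in> CxH \<Longrightarrow> v \<noteq> 0 \<Longrightarrow>
        0 < Re (\<Sum>j\<in>UNIV. \<Sum>k\<in>UNIV. H q j k * v$j * cnj (v$k))"
    and diff: "\<And>j k. (\<lambda>p. H p j k) differentiable_on CxH"
  shows "kahler_on CxH H"
proof -
  define D where "D (l::2) j k y t = (if l = 1 then Dy j k y t else Dt j k y t)" for l j k y t
  have dR: "dRe (\<lambda>q. H q j k) l p = 0" if "p \<in> CxH" for j k l p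
    by (rule dRe_val[OF _ that]) (rule eq)
  have dI: "dIm (\<lambda>q. H q j k) l p = of_real (D l j k (Im (p$1)) (Im (p$2)))" if "p \<in> CxH" for j k l p
    unfolding D_def by (rule dIm_val[OF _ d1 d2 that]) (rule eq, assumption+)
  have Dc: "D l j k y t = D j l k y t" if "t > 0" for l j k y t
    using exhaust_2[of l] exhaust_2[of j] closed[OF that] unfolding D_def by auto
  have Ds: "D l j k y t = D l k j y t" for l j k y t
    unfolding D_def using s1 s2 by auto
  have herm: "\<forall>p\<in>CxH. \<forall>j k. H p k j = cnj (H p j k)"
  proof (intro ballI allI)
    fix p j k assume p: "p \<in> CxH"
    show "H p k j = cnj (H p j k)" unfolding eq[OF p] sym[of k j] by simp
  qed
  show ?thesis
    unfolding kahler_on_def hermitian_metric_on_def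
  proof (intro conjI ballI allI)
    fix p j k l assume p: "p \<in> CxH"
    have t: "Im (p$2) > 0" using p by (simp add: CxH_def)
    show "wirt (\<lambda>q. H q j k) l p = wirt (\<lambda>q. H q l k) j p"
      unfolding wirt_def dR[OF p] dI[OF p] using Dc[OF t, of l j k] by simp
    show "wirtbar (\<lambda>q. H q j k) l p = wirtbar (\<lambda>q. H q j l) k p"
      unfolding wirtbar_def dR[OF p] dI[OF p]
      using Dc[OF t, of l k j] Ds[of l j k] Ds[of k j l] by simp
  qed (use herm pos diff in blast)+
qed



definition Gs :: "real \<Rightarrow> 2 \<Rightarrow> 2 \<Rightarrow> real \<Rightarrow> real \<Rightarrow> real" where
  "Gs c j k y t = (if j = 1 \<and> k = 1 then 1 / c else if j = 2 \<and> k = 2 then 1 / (4 * t^2) else 0)"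

lemma slice_s_eq:
  assumes c: "0 < Im s0" and q: "q \<in> CxH"
  shows "slice_s_metric s0 q j k = of_real (Gs (Im s0) j k (Im (q$1)) (Im (q$2)))"
proof -
  have t: "Im (q$2) > 0" using q by (simp add: CxH_def)
  have [simp]: "(1::2) \<noteq> 2" "(2::2) \<noteq> 1" by auto
  show ?thesis
    using exhaust_2[of j] exhaust_2[of k] c t
    by (auto simp: slice_s_metric_def Gs_def hUform_def hform_def gXS_def gL2_def gWP_def acoef_def
        axis_def complex_diff_cnj field_simps power2_eq_square)
qed

definition Ga :: "real \<Rightarrow> 2 \<Rightarrow> 2 \<Rightarrow> real \<Rightarrow> real \<Rightarrow> real" where
  "Ga c j k y t = (if j = 1 \<and> k = 1 then 1 / t else if j = 2 \<and> k = 2 then 1 / (4 * t^2) + y^2 / t^3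
     else - y / t^2)"

lemma slice_a_eq:
  assumes c: "0 < Im a0" and q: "q \<in> CxH"
  shows "slice_alpha_metric a0 q j k = of_real (Ga (Im a0) j k (Im (q$1)) (Im (q$2)))"
proof -
  have t: "Im (q$2) > 0" using q by (simp add: CxH_def)
  have [simp]: "(1::2) \<noteq> 2" "(2::2) \<noteq> 1" by auto
  show ?thesis
    using exhaust_2[of j] exhaust_2[of k] c t
    by (auto simp: slice_alpha_metric_def Ga_def hUform_def hform_def gXS_def gL2_def gWP_def acoef_def
        axis_def complex_diff_cnj field_simps power2_eq_square power3_eq_cube complex_eq_iff)
qed



lemma hd_Imnth[derivative_intros]: "((\<lambda>p::complex^'n. Im (p $ i)) has_derivative (\<lambda>p. Im (p $ i))) F"
  by (rule bounded_linear_imp_has_derivative)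
     (rule bounded_linear_compose[OF bounded_linear_Im bounded_linear_vec_nth])

lemma diff_Imnth[derivative_intros]: "(\<lambda>p::complex^'n. Im (p $ i)) differentiable F"
  using hd_Imnth by (auto simp: differentiable_def)

lemma open_CxH: "open CxH"
  unfolding CxH_def
  by (rule open_Collect_less) (auto intro!: continuous_intros
       linear_continuous_on bounded_linear_compose[OF bounded_linear_Im bounded_linear_vec_nth])

lemma diff_transfer:
  fixes H :: "complex^2 \<Rightarrow> complex"
  assumes eq: "\<And>q. q \<in> CxH \<Longrightarrow> H q = of_real (g q)"
    and d: "\<And>p. p \<in> CxH \<Longrightarrow> g differentiable at p"
  shows "H differentiable_on CxH"
proof (rule differentiable_at_imp_differentiable_on)
  fix p assume p: "p \<in> CxH"
  from d[OF p] obtain D where D: "(g has_derivative D) (at p)" by (auto simp: differentiable_def)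
  have "((\<lambda>q. complex_of_real (g q)) has_derivative (\<lambda>x. of_real (D x))) (at p)"
    using D by (auto intro!: derivative_intros)
  then have "(H has_derivative (\<lambda>x. of_real (D x))) (at p)"
    by (rule has_derivative_transform_within_open[OF _ open_CxH p]) (simp add: eq)
  then show "H differentiable at p" by (auto simp: differentiable_def)
qed

lemma two_ne[simp]: "(1::2) \<noteq> 2" "(2::2) \<noteq> 1" by auto

lemma slice_s_kahler:
  assumes c: "0 < Im s0"
  shows "kahler_on CxH (slice_s_metric s0)"
proof (rule kahler_from_real[where G = "Gs (Im s0)"
    and Dy = "\<lambda>j k y t. 0"
    and Dt = "\<lambda>j k y t. if j = 2 \<and> k = 2 then - 1 / (2 * t^3) else 0"])
  show "\<And>q j k. q \<in> CxH \<Longrightarrow> slice_s_metric s0 q j k = of_real (Gs (Im s0) j k (Im (q$1)) (Im (q$2)))"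
    by (rule slice_s_eq[OF c])
  show "\<And>j k y t. Gs (Im s0) j k y t = Gs (Im s0) k j y t" by (auto simp: Gs_def)
  show "\<And>j k y t. 0 < t \<Longrightarrow> ((\<lambda>y. Gs (Im s0) j k y t) has_real_derivative 0) (at y)"
    by (simp add: Gs_def)
  show "\<And>j k y t. 0 < t \<Longrightarrow> ((\<lambda>t. Gs (Im s0) j k y t) has_real_derivative
      (if j = 2 \<and> k = 2 then - 1 / (2 * t^3) else 0)) (at t)"
  proof -
    fix j k :: 2 and y t :: real assume t: "0 < t"
    show "((\<lambda>t. Gs (Im s0) j k y t) has_real_derivative
      (if j = 2 \<and> k = 2 then - 1 / (2 * t^3) else 0)) (at t)"
      using exhaust_2[of j] exhaust_2[of k] t
      by (elim disjE) (auto simp: Gs_def intro!: derivative_eq_intros simp: field_simps power2_eq_square power3_eq_cube)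
  qed
  show "\<And>j k y t. (0::real) = 0" by simp
  show "\<And>j k y t. (if j = 2 \<and> k = 2 then - 1 / (2 * t ^ 3) else 0) =
          (if k = 2 \<and> j = 2 then - 1 / (2 * t ^ 3) else (0::real))" by auto
  show "\<And>k y t. 0 < t \<Longrightarrow> (if (1::2) = 2 \<and> k = 2 then - 1 / (2 * t ^ 3) else 0) = (0::real)" by simp
  show "\<And>q v. q \<in> CxH \<Longrightarrow> v \<noteq> 0 \<Longrightarrow>
        0 < Re (\<Sum>j\<in>UNIV. \<Sum>k\<in>UNIV. slice_s_metric s0 q j k * v$j * cnj (v$k))"
  proof -
    fix q v assume q: "q \<in> CxH" and v: "(v::complex^2) \<noteq> 0"
    have t: "Im (q$2) > 0" using q by (simp add: CxH_def)
    have "v$1 \<noteq> 0 \<or> v$2 \<noteq> 0" using v by (metis exhaust_2 vec_eq_iff zero_index)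
    then have AB: "0 < Re (v$1)^2 + Im (v$1)^2 \<or> 0 < Re (v$2)^2 + Im (v$2)^2"
      by (auto simp: complex_eq_iff sum_power2_gt_zero_iff)
    have A0: "0 \<le> (Re (v$1)^2 + Im (v$1)^2) / Im s0" using c by simp
    have B0: "0 \<le> (Re (v$2)^2 + Im (v$2)^2) / (4 * Im (q$2)^2)" by simp
    have pos: "0 < (Re (v$1)^2 + Im (v$1)^2) / Im s0 + (Re (v$2)^2 + Im (v$2)^2) / (4 * Im (q$2)^2)"
      using AB A0 B0 c t by (auto intro: add_pos_nonneg add_nonneg_pos)
    show "0 < Re (\<Sum>j\<in>UNIV. \<Sum>k\<in>UNIV. slice_s_metric s0 q j k * v$j * cnj (v$k))"
      using pos by (simp add: sum_2 slice_s_eq[OF c q] Gs_def power2_eq_square field_simps)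
  qed
  show "\<And>j k. (\<lambda>p. slice_s_metric s0 p j k) differentiable_on CxH"
  proof -
    fix j k
    show "(\<lambda>p. slice_s_metric s0 p j k) differentiable_on CxH"
    proof (rule diff_transfer[where g = "\<lambda>q. Gs (Im s0) j k (Im (q$1)) (Im (q$2))"])
      show "\<And>q. q \<in> CxH \<Longrightarrow> slice_s_metric s0 q j k = of_real (Gs (Im s0) j k (Im (q$1)) (Im (q$2)))"
        by (rule slice_s_eq[OF c])
      fix p assume "p \<in> CxH"
      then have t: "Im (p$2) \<noteq> 0" by (simp add: CxH_def)
      show "(\<lambda>q. Gs (Im s0) j k (Im (q$1)) (Im (q$2))) differentiable at p"
        unfolding Gs_def using t
        by (cases "j = 1 \<and> k = 1"; cases "j = 2 \<and> k = 2") (auto intro!: derivative_intros)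
    qed
  qed
qed

lemma slice_a_kahler:
  assumes c: "0 < Im a0"
  shows "kahler_on CxH (slice_alpha_metric a0)"
proof (rule kahler_from_real[where G = "Ga (Im a0)"
    and Dy = "\<lambda>j k y t. if j = 1 \<and> k = 1 then 0 else if j = 2 \<and> k = 2 then 2 * y / t^3 else - 1 / t^2"
    and Dt = "\<lambda>j k y t. if j = 1 \<and> k = 1 then - 1 / t^2 else if j = 2 \<and> k = 2
        then - 1 / (2 * t^3) - 3 * y^2 / t^4 else 2 * y / t^3"])
  show "\<And>q j k. q \<in> CxH \<Longrightarrow> slice_alpha_metric a0 q j k = of_real (Ga (Im a0) j k (Im (q$1)) (Im (q$2)))"
    by (rule slice_a_eq[OF c])
  show "\<And>j k y t. Ga (Im a0) j k y t = Ga (Im a0) k j y t" by (auto simp: Ga_def)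
  show "\<And>j k y t. 0 < t \<Longrightarrow> ((\<lambda>y. Ga (Im a0) j k y t) has_real_derivative
     (if j = 1 \<and> k = 1 then 0 else if j = 2 \<and> k = 2 then 2 * y / t^3 else - 1 / t^2)) (at y)"
  proof -
    fix j k :: 2 and y t :: real assume t: "0 < t"
    show "((\<lambda>y. Ga (Im a0) j k y t) has_real_derivative
     (if j = 1 \<and> k = 1 then 0 else if j = 2 \<and> k = 2 then 2 * y / t^3 else - 1 / t^2)) (at y)"
      using exhaust_2[of j] exhaust_2[of k] t
      by (elim disjE) (auto simp: Ga_def intro!: derivative_eq_intros simp: field_simps power2_eq_square power3_eq_cube)
  qed
  show "\<And>j k y t. 0 < t \<Longrightarrow> ((\<lambda>t. Ga (Im a0) j k y t) has_real_derivative
     (if j = 1 \<and> k = 1 then - 1 / t^2 else if j = 2 \<and> k = 2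
        then - 1 / (2 * t^3) - 3 * y^2 / t^4 else 2 * y / t^3)) (at t)"
  proof -
    fix j k :: 2 and y t :: real assume t: "0 < t"
    show "((\<lambda>t. Ga (Im a0) j k y t) has_real_derivative
     (if j = 1 \<and> k = 1 then - 1 / t^2 else if j = 2 \<and> k = 2
        then - 1 / (2 * t^3) - 3 * y^2 / t^4 else 2 * y / t^3)) (at t)"
      using exhaust_2[of j] exhaust_2[of k] t
      by (elim disjE) (auto simp: Ga_def intro!: derivative_eq_intros
          simp: field_simps power2_eq_square power3_eq_cube power4_eq_xxxx)
  qed
  show "\<And>j k y t. (if j = 1 \<and> k = 1 then 0 else if j = 2 \<and> k = 2 then 2 * y / t^3 else - 1 / t^2) =
     (if k = 1 \<and> j = 1 then 0 else if k = 2 \<and> j = 2 then 2 * y / t^3 else - 1 / (t::real)^2)" by auto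
  show "\<And>j k y t. (if j = 1 \<and> k = 1 then - 1 / t^2 else if j = 2 \<and> k = 2
        then - 1 / (2 * t^3) - 3 * y^2 / t^4 else 2 * y / t^3) =
     (if k = 1 \<and> j = 1 then - 1 / t^2 else if k = 2 \<and> j = 2
        then - 1 / (2 * t^3) - 3 * y^2 / t^4 else 2 * y / (t::real)^3)" by auto
  show "\<And>(k::2) y t. 0 < t \<Longrightarrow> (if (1::2) = 1 \<and> k = 1 then - 1 / t^2 else if (1::2) = 2 \<and> k = 2
        then - 1 / (2 * t^3) - 3 * y^2 / t^4 else 2 * y / t^3) =
     (if (2::2) = 1 \<and> k = 1 then 0 else if (2::2) = 2 \<and> k = 2 then 2 * y / t^3 else - 1 / (t::real)^2)"
    subgoal for k y t using exhaust_2[of k] by auto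
    done
  show "\<And>q v. q \<in> CxH \<Longrightarrow> v \<noteq> 0 \<Longrightarrow>
        0 < Re (\<Sum>j\<in>UNIV. \<Sum>k\<in>UNIV. slice_alpha_metric a0 q j k * v$j * cnj (v$k))"
  proof -
    fix q v assume q: "q \<in> CxH" and v: "(v::complex^2) \<noteq> 0"
    define t where "t = Im (q$2)"
    define y where "y = Im (q$1)"
    define a where "a = Re (v$1)"
    define b where "b = Im (v$1)"
    define cc where "cc = Re (v$2)"
    define d where "d = Im (v$2)"
    have t: "t > 0" using q by (simp add: CxH_def t_def)
    have "v$1 \<noteq> 0 \<or> v$2 \<noteq> 0" using v by (metis exhaust_2 vec_eq_iff zero_index)
    then have AB: "0 < a^2 + b^2 \<or> 0 < cc^2 + d^2"
      by (auto simp: complex_eq_iff sum_power2_gt_zero_iff a_def b_def cc_def d_def)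
    have pos: "0 < ((a - y * cc / t)^2 + (b - y * d / t)^2) / t + (cc^2 + d^2) / (4 * t^2)"
    proof (cases "0 < cc^2 + d^2")
      case True
      then show ?thesis using t by (intro add_nonneg_pos) auto
    next
      case False
      then have "cc = 0" "d = 0" by (auto simp: sum_power2_gt_zero_iff)
      then show ?thesis using AB t by (auto simp: sum_power2_gt_zero_iff)
    qed
    have "Re (\<Sum>j\<in>UNIV. \<Sum>k\<in>UNIV. slice_alpha_metric a0 q j k * v$j * cnj (v$k))
        = ((a - y * cc / t)^2 + (b - y * d / t)^2) / t + (cc^2 + d^2) / (4 * t^2)"
      using t unfolding a_def b_def cc_def d_def y_def t_def
      by (simp add: sum_2 slice_a_eq[OF c q] Ga_def power2_eq_square power3_eq_cube field_simps)
    then show "0 < Re (\<Sum>j\<in>UNIV. \<Sum>k\<in>UNIV. slice_alpha_metric a0 q j k * v$j * cnj (v$k))"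
      using pos by simp
  qed
  show "\<And>j k. (\<lambda>p. slice_alpha_metric a0 p j k) differentiable_on CxH"
  proof -
    fix j k
    show "(\<lambda>p. slice_alpha_metric a0 p j k) differentiable_on CxH"
    proof (rule diff_transfer[where g = "\<lambda>q. Ga (Im a0) j k (Im (q$1)) (Im (q$2))"])
      show "\<And>q. q \<in> CxH \<Longrightarrow> slice_alpha_metric a0 q j k = of_real (Ga (Im a0) j k (Im (q$1)) (Im (q$2)))"
        by (rule slice_a_eq[OF c])
      fix p assume "p \<in> CxH"
      then have t: "Im (p$2) \<noteq> 0" by (simp add: CxH_def)
      show "(\<lambda>q. Ga (Im a0) j k (Im (q$1)) (Im (q$2))) differentiable at p"
        unfolding Ga_def using t
        by (cases "j = 1 \<and> k = 1"; cases "j = 2 \<and> k = 2") (auto intro!: derivative_intros)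
    qed
  qed
qed

lemma invariance:
  assumes "0 < Im \<alpha>" "0 < Im s"
  shows "hUform (gact n m (z, \<alpha>, s)) (dgact m v) (dgact m w) = hUform (z, \<alpha>, s) v w"
proof -
  obtain v1 v2 v3 where v: "v = (v1, v2, v3)" by (cases v) auto
  obtain w1 w2 w3 where w: "w = (w1, w2, w3)" by (cases w) auto
  have s: "s - cnj s \<noteq> 0" using assms by (simp add: complex_diff_cnj complex_eq_iff)
  have a: "acoef (z + of_int n + of_int m * s) s = acoef z s - of_int m"
    using s unfolding acoef_def by (simp add: field_simps)
  show ?thesis
    unfolding v w gact_def dgact_def hUform_def hform_def
    by (simp add: a) (simp add: algebra_simps)
qed


theorem mainTheorem1:
  shows "(\<forall>s0. 0 < Im s0 \<longrightarrow> kahler_on CxH (slice_s_metric s0))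
       \<and> (\<forall>\<alpha>0. 0 < Im \<alpha>0 \<longrightarrow> kahler_on CxH (slice_alpha_metric \<alpha>0))
       \<and> (\<forall>n m z \<alpha> s v w. 0 < Im \<alpha> \<longrightarrow> 0 < Im s \<longrightarrow>
            hUform (gact n m (z, \<alpha>, s)) (dgact m v) (dgact m w) = hUform (z, \<alpha>, s) v w)"
  using slice_s_kahler slice_a_kahler invariance by blast

end
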